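(* Suppose that every even Gaussian integer $a+ib$ with integers $a>1$, $b>1$ can be written as $z=p+q$ with $p,q$ Gaussian primes lying in $Q=\{x+iy : x,y\in\mathbb{Z},\ x>0,\ y>0\}$. Then there are infinitely many positive integers $n$ such that $n^2+1$ is a rational prime.
   Context: Gaussian integers are the elements $a+ib$ of $\mathbb{Z}[i]$, with norm $N(a+ib)=a^2+b^2$. A Gaussian prime is an irreducible (equivalently, prime) element of $\mathbb{Z}[i]$. A Gaussian integer $z$ is called even if $N(z)$ is even (equivalently, $a+b$ is even, equivalently $z$ is divisible by $1+i$). $Q$ denotes the open first quadrant of Gaussian integers $\{a+ib: a>0, b>0\}$. *)

theory Defs
  imports "HOL-Computational_Algebra.Primes"
begin

type_synonym gauss = "int \<times> int"

definition gmult :: "gauss \<Rightarrow> gauss \<Rightarrow> gauss" where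
  "gmult z w = (fst z * fst w - snd z * snd w, fst z * snd w + snd z * fst w)"

definition gadd :: "gauss \<Rightarrow> gauss \<Rightarrow> gauss" where
  "gadd z w = (fst z + fst w, snd z + snd w)"

definition gnorm :: "gauss \<Rightarrow> int" where
  "gnorm z = fst z ^ 2 + snd z ^ 2"

definition gunit :: "gauss \<Rightarrow> bool" where
  "gunit u \<longleftrightarrow> (\<exists>v. gmult u v = (1, 0))"

definition gauss_prime :: "gauss \<Rightarrow> bool" where
  "gauss_prime p \<longleftrightarrow> p \<noteq> (0, 0) \<and> \<not> gunit p \<and>
     (\<forall>u v. p = gmult u v \<longrightarrow> gunit u \<or> gunit v)"

definition gauss_even :: "gauss \<Rightarrow> bool" where
  "gauss_even z \<longleftrightarrow> even (gnorm z)"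

definition Q :: "gauss set" where
  "Q = {z. fst z > 0 \<and> snd z > 0}"

end

theory Submission imports Defs begin

lemma gunit_norm: assumes "gunit u" shows "gnorm u = 1"
proof -
  obtain v where v: "gmult u v = (1,0)" using assms gunit_def by auto
  have "gnorm (gmult u v) = gnorm u * gnorm v"
    by (simp add: gnorm_def gmult_def power2_eq_square algebra_simps)
  hence "gnorm u * gnorm v = 1" using v by (simp add: gnorm_def)
  moreover have "gnorm u \<ge> 0" "gnorm v \<ge> 0" by (simp_all add: gnorm_def)
  ultimately have "gnorm u = 1 \<or> gnorm u = -1" using pos_zmult_eq_1_iff_lemma by blast
  thus ?thesis using \<open>gnorm u \<ge> 0\<close> by auto
qed

lemma sqrt_ex: "\<exists>s::nat. s^2 \<le> p \<and> p < (s+1)^2"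
proof (induction p)
  case 0 then show ?case by (rule exI[of _ 0]) simp
next
  case (Suc p)
  then obtain s where s: "s^2 \<le> p" "p < (s+1)^2" by blast
  show ?case
  proof (cases "(s+1)^2 \<le> Suc p")
    case True
    have "Suc p < (s+2)^2" using s(2) True by (simp add: power2_eq_square)
    then show ?thesis using True by (intro exI[of _ "s+1"]) (simp add: numeral_2_eq_2 add.commute)
  next
    case False then show ?thesis using s by (intro exI[of _ s]) auto
  qed
qed

lemma thue:
  fixes p y :: int
  assumes "p > 0" and s: "s^2 \<le> p" "p < (s+1)^2" "s \<ge> 0"
  shows "\<exists>a b. (a,b) \<noteq> (0,0) \<and> \<bar>a\<bar> \<le> s \<and> \<bar>b\<bar> \<le> s \<and> p dvd (a + b*y)"
proof -
  define A where "A = {0..s} \<times> {0..s}"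
  define f where "f = (\<lambda>(u,v). (u + v*y) mod p)"
  have "card A = nat ((s+1)^2)" unfolding A_def using s(3)
    by (simp add: card_cartesian_product power2_eq_square nat_mult_distrib)
  have "f ` A \<subseteq> {0..<p}" unfolding f_def using assms(1) by auto
  hence "card (f ` A) \<le> card {0..<p}" by (intro card_mono) auto
  hence "card (f ` A) \<le> nat p" by simp
  moreover have "card A > nat p" using \<open>card A = _\<close> s(2,3) assms(1) by (simp add: nat_less_eq_zless)
  ultimately have "\<not> inj_on f A" using card_image by fastforce
  then obtain x1 x2 where x: "x1 \<in> A" "x2 \<in> A" "x1 \<noteq> x2" "f x1 = f x2" unfolding inj_on_def by blast
  obtain u1 v1 u2 v2 where xs: "x1 = (u1,v1)" "x2 = (u2,v2)" by fastforce
  have "p dvd ((u1 - u2) + (v1 - v2)*y)"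
  proof -
    have "(u1 + v1*y) mod p = (u2 + v2*y) mod p" using x(4) xs f_def by simp
    hence "p dvd (u1 + v1*y) - (u2 + v2*y)" by (simp add: mod_eq_dvd_iff)
    thus ?thesis by (simp add: algebra_simps)
  qed
  moreover have "\<bar>u1-u2\<bar> \<le> s" "\<bar>v1-v2\<bar> \<le> s" using x(1,2) xs A_def by auto
  moreover have "(u1-u2, v1-v2) \<noteq> (0,0)" using x(3) xs by auto
  ultimately show ?thesis by blast
qed

lemma key:
  fixes y :: int
  assumes "y > 0" "gauss_prime (1,y)"
  shows "prime (y^2+1)"
proof (rule ccontr)
  assume np: "\<not> prime (y^2+1)"
  define n where "n = y^2 + 1"
  have "y^2 \<ge> 1" using assms(1) by (simp add: one_le_power)
  hence n2: "n \<ge> 2" using n_def by simp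
  have "\<not> is_unit n" "n \<noteq> 0" using n2 by auto
  then obtain p where p: "prime p" "p dvd n" using prime_divisor_exists by blast
  have p0: "p > 1" using p(1) prime_gt_1_int by blast
  have "p \<le> n" using p(2) n2 zdvd_imp_le by auto
  moreover have "p \<noteq> n" using p(1) np n_def by auto
  ultimately have pn: "p < n" by simp
  obtain s0 :: nat where s0: "s0^2 \<le> nat p" "nat p < (s0+1)^2" using sqrt_ex by blast
  define s where "s = int s0"
  have i1: "int (s0^2) \<le> int (nat p)" using s0(1) by linarith
  have i2: "int (nat p) < int ((s0+1)^2)" using s0(2) by linarith
  have s: "s^2 \<le> p" "p < (s+1)^2" "s \<ge> 0" using i1 i2 p0 unfolding s_def by (simp_all add: add.commute)
  have "\<exists>a b. (a,b) \<noteq> (0,0) \<and> \<bar>a\<bar> \<le> s \<and> \<bar>b\<bar> \<le> s \<and> p dvd (a + b*y)"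
    using p0 s by (intro thue) auto
  then obtain a b where ab: "(a,b) \<noteq> (0,0)" "\<bar>a\<bar> \<le> s" "\<bar>b\<bar> \<le> s" "p dvd (a + b*y)"
    by blast
  have eq1: "a^2 + b^2 = (a + b*y)*(a - b*y) + b^2 * n" unfolding n_def by (simp add: algebra_simps power2_eq_square)
  have pN: "p dvd a^2 + b^2" unfolding eq1 using ab(4) p(2) by simp
  have Npos: "a^2 + b^2 > 0" using ab(1) by (simp add: sum_power2_gt_zero_iff)
  have a2: "a^2 \<le> p" "b^2 \<le> p" using ab(2,3) s(1)
    by (metis abs_ge_zero order_trans power2_abs power_mono)+
  obtain t where t: "a^2 + b^2 = p * t" using pN by blast
  have "p*t > 0" using t Npos by simp
  hence "t > 0" using p0 by (simp add: zero_less_mult_iff)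
  moreover have "p*t \<le> p*2" using t a2 by linarith
  hence "t \<le> 2" using p0 by simp
  ultimately have "t = 1 \<or> t = 2" by auto
  moreover have "t \<noteq> 2"
  proof
    assume "t = 2"
    hence "a^2 = p" using t a2 by simp
    hence "p = \<bar>a\<bar> * \<bar>a\<bar>" by (simp add: power2_eq_square abs_mult[symmetric])
    hence "is_unit \<bar>a\<bar>" using p(1) irreducibleD[OF prime_elem_imp_irreducible[OF prime_imp_prime_elem[OF p(1)]]] by blast
    hence "\<bar>a\<bar> = 1" by simp
    thus False using \<open>a^2 = p\<close> p0 by (metis power2_abs one_power2 less_irrefl)
  qed
  ultimately have Np: "a^2 + b^2 = p" using t by simp
  have d2: "p dvd (a*y - b)"
  proof -
    have "a*y - b = y*(a + b*y) - b*n" unfolding n_def by (simp add: algebra_simps power2_eq_square)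
    thus ?thesis using ab(4) p(2) by simp
  qed
  obtain h1 where h1: "a + b*y = p*h1" using ab(4) by blast
  obtain h2 where h2: "a*y - b = p*h2" using d2 by blast
  have "p*(a*h1 - b*h2) = p*1"
  proof -
    have "p*(a*h1 - b*h2) = a*(a+b*y) - b*(a*y - b)" using h1 h2 by (simp add: algebra_simps)
    also have "\<dots> = a^2 + b^2" by (simp add: algebra_simps power2_eq_square)
    finally show ?thesis using Np by simp
  qed
  hence e1: "a*h1 - b*h2 = 1" using p0 by simp
  have "p*(a*h2 + b*h1) = p*y"
  proof -
    have "p*(a*h2 + b*h1) = a*(a*y-b) + b*(a+b*y)" using h1 h2 by (simp add: algebra_simps)
    also have "\<dots> = (a^2 + b^2)*y" by (simp add: algebra_simps power2_eq_square)
    finally show ?thesis using Np by simp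
  qed
  hence e2: "a*h2 + b*h1 = y" using p0 by simp
  have fac: "(1,y) = gmult (a,b) (h1,h2)" using e1 e2 by (simp add: gmult_def)
  have nm: "gnorm (gmult (a,b) (h1,h2)) = gnorm (a,b) * gnorm (h1,h2)"
    by (simp add: gnorm_def gmult_def power2_eq_square algebra_simps)
  hence "gnorm (1,y) = p * gnorm (h1,h2)" using fac Np by (simp add: gnorm_def)
  hence "n = p * gnorm (h1,h2)" using n_def by (simp add: gnorm_def)
  hence "gnorm (h1,h2) \<noteq> 1" using pn by auto
  moreover have "gnorm (a,b) \<noteq> 1" using Np p0 by (simp add: gnorm_def)
  ultimately show False using assms(2) fac gunit_norm unfolding gauss_prime_def by blast
qed


lemma key_nat:
  fixes y :: int
  assumes "y > 0" "gauss_prime (1,y)"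
  shows "nat y > 0 \<and> prime ((nat y)^2 + 1)"
proof -
  have "prime (y^2+1)" using key assms by blast
  moreover have "y^2 + 1 = int ((nat y)^2 + 1)" using assms(1) by simp
  ultimately have "prime (int ((nat y)^2 + 1))" by simp
  hence "prime ((nat y)^2 + 1)" by (simp only: prime_nat_int_transfer)
  thus ?thesis using assms(1) by simp
qed

theorem mainTheorem1:
  assumes "\<forall>a b :: int. a > 1 \<and> b > 1 \<and> gauss_even (a, b) \<longrightarrow>
             (\<exists>p q. gauss_prime p \<and> gauss_prime q \<and> p \<in> Q \<and> q \<in> Q \<and> (a, b) = gadd p q)"
  shows "infinite {n :: nat. n > 0 \<and> prime (n ^ 2 + 1)}"
proof -
  have "\<exists>n\<in>{n :: nat. n > 0 \<and> prime (n ^ 2 + 1)}. N < n" for N :: nat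
  proof -
    define b :: int where "b = 2 * int N + 2"
    have ev: "gauss_even (2, b)" unfolding gauss_even_def gnorm_def b_def by (simp add: power2_eq_square)
    have "b > 1" unfolding b_def by simp
    then obtain p q where pq: "gauss_prime p" "gauss_prime q" "p \<in> Q" "q \<in> Q" "(2, b) = gadd p q"
      using assms[rule_format, of 2 b] ev by auto
    obtain p1 p2 q1 q2 where ps: "p = (p1,p2)" "q = (q1,q2)" by fastforce
    have c: "p1 > 0" "p2 > 0" "q1 > 0" "q2 > 0" "p1 + q1 = 2" "p2 + q2 = b"
      using pq(3,4,5) ps unfolding Q_def gadd_def by auto
    hence "p1 = 1" "q1 = 1" by auto
    show ?thesis
    proof (cases "p2 > int N")
      case True
      then show ?thesis using key_nat[of p2] pq(1) ps c \<open>p1 = 1\<close> by (intro bexI[of _ "nat p2"]) auto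
    next
      case False
      hence "q2 > int N" using c b_def by linarith
      then show ?thesis using key_nat[of q2] pq(2) ps c \<open>q1 = 1\<close> by (intro bexI[of _ "nat q2"]) auto
    qed
  qed
  thus ?thesis using finite_nat_set_iff_bounded by (meson less_asym)
qed

end
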